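(* For integers $n\ge 2$ and $k\ge 0$, let $$g^{(n-1)}_k(x)=\frac{\mathrm{Wr}\{\sin(\pi x),\sin(2\pi x),\dots,\sin((n-1)\pi x),\sin((n+k)\pi x)\}}{\mathrm{Wr}\{\sin(\pi x),\sin(2\pi x),\dots,\sin((n-1)\pi x)\}},\qquad x\in(0,1).$$ Then $$\int_0^1 \big(g^{(n-1)}_k(x)\big)^2\,dx=\frac{1}{2}\pi^{2n-2}\prod_{i=1}^{n-1}\big((n+k)^2-i^2\big)=\frac{\pi^{2n-2}\,\Gamma(2n+k)}{2\,(n+k)\,k!}.$$
   Context: For smooth functions $f_1,\dots,f_m$ of $x$, $\mathrm{Wr}\{f_1,\dots,f_m\}$ denotes the determinant of the $m\times m$ matrix with $(i,j)$ entry $f_j^{(i-1)}(x)$, derivatives taken with respect to $x$. *)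

theory Defs
  imports "HOL-Analysis.Analysis" "Jordan_Normal_Form.Determinant"
begin

definition wronskian :: "nat \<Rightarrow> (nat \<Rightarrow> real \<Rightarrow> real) \<Rightarrow> real \<Rightarrow> real" where
  "wronskian m fs x = Determinant.det (Matrix.mat m m (\<lambda>(i, j). (deriv ^^ i) (fs j) x))"

definition sin_fam :: "nat \<Rightarrow> real \<Rightarrow> real" where
  "sin_fam j = (\<lambda>x. sin (real (j + 1) * pi * x))"

definition g_fun :: "nat \<Rightarrow> nat \<Rightarrow> real \<Rightarrow> real" where
  "g_fun n k x =
     wronskian n (\<lambda>j. if j < n - 1 then sin_fam j else (\<lambda>x. sin (real (n + k) * pi * x))) x
     / wronskian (n - 1) sin_fam x"

end

theory Submission
  imports Defs "HOL-Computational_Algebra.Polynomial"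
begin


definition tp :: "real poly \<times> real poly \<Rightarrow> real \<Rightarrow> real" where
  "tp PR x = poly (fst PR) (cos (pi*x)) + sin (pi*x) * poly (snd PR) (cos (pi*x))"

definition Dp :: "real poly \<times> real poly \<Rightarrow> real poly \<times> real poly" where
  "Dp PR = (Polynomial.smult pi ([:0,1:] * snd PR - [:1,0,-1:] * pderiv (snd PR)), Polynomial.smult (-pi) (pderiv (fst PR)))"

definition pm :: "real poly \<times> real poly \<Rightarrow> real poly \<times> real poly \<Rightarrow> real poly \<times> real poly" where
  "pm A B = (fst A * fst B + [:1,0,-1:] * snd A * snd B, fst A * snd B + snd A * fst B)"

definition padd :: "real poly \<times> real poly \<Rightarrow> real poly \<times> real poly \<Rightarrow> real poly \<times> real poly" where
  "padd A B = (fst A + fst B, snd A + snd B)"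

lemma sc1: "cos t * cos t + sin t * sin t = (1::real)"
  by (metis power2_eq_square sin_cos_squared_add add.commute)

lemma sc_id: "cos t * (cos t * y) + sin t * (sin t * y) = (y::real)"
proof -
  have "(cos t * cos t + sin t * sin t) * y = y" by (simp only: sc1 mult_1)
  then show ?thesis by (simp only: distrib_right mult.assoc)
qed

lemma ss_id: "sin t * sin t = 1 - cos t * (cos t::real)"
  using sin_cos_squared_add[of t] by (simp add: power2_eq_square)

lemma tp_padd: "tp (padd A B) x = tp A x + tp B x"
  by (simp add: tp_def padd_def algebra_simps)

lemma tp_pm: "tp (pm A B) x = tp A x * tp B x"
proof -
  let ?s = "sin (pi*x)" and ?c = "cos (pi*x)"
  have "tp A x * tp B x = poly (fst A) ?c * poly (fst B) ?c + (?s * ?s) * poly (snd A) ?c * poly (snd B) ?c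
     + ?s * (poly (fst A) ?c * poly (snd B) ?c + poly (snd A) ?c * poly (fst B) ?c)"
    by (simp add: tp_def algebra_simps)
  also have "\<dots> = tp (pm A B) x" unfolding ss_id by (simp add: tp_def pm_def algebra_simps)
  finally show ?thesis by simp
qed

lemma tp_zero[simp]: "tp (0,0) x = 0" by (simp add: tp_def)

lemma Dp_zero[simp]: "Dp (0,0) = (0,0)" by (simp add: Dp_def)

lemma tp_deriv: "(tp A has_real_derivative tp (Dp A) x) (at x)"
proof -
  obtain P R where A: "A = (P,R)" by (cases A)
  have s: "sin (pi*x) * sin (pi*x) = 1 - cos (pi*x) * cos (pi*x)"
    using sin_cos_squared_add[of "pi*x"] by (simp add: power2_eq_square)
  have d: "((\<lambda>x. poly P (cos (pi*x)) + sin (pi*x) * poly R (cos (pi*x))) has_real_derivative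
     poly (pderiv P) (cos (pi*x)) * (- sin (pi*x) * pi) + (cos (pi*x) * pi * poly R (cos (pi*x))
      + sin (pi*x) * (poly (pderiv R) (cos (pi*x)) * (- sin (pi*x) * pi)))) (at x)"
    by (auto intro!: derivative_eq_intros DERIV_chain2[OF poly_DERIV])
  show ?thesis unfolding A tp_def[abs_def] using d
    apply (simp add: Dp_def)
    apply (erule DERIV_cong)
    apply (simp add: algebra_simps)
    using sc_id[of "pi*x" "poly (pderiv R) (cos(pi*x))"] by (metis distrib_left)
qed

fun Tm :: "nat \<Rightarrow> nat \<Rightarrow> real poly \<times> real poly" where
  "Tm 0 l = (if l = 0 then (0,1) else (0,0))"
| "Tm (Suc i) l = padd (Dp (Tm i l)) (if l = 0 then (0,0) else pm (0,[:-pi:]) (Tm i (l-1)))"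

lemma Tm_zero: "i < l \<Longrightarrow> Tm i l = (0,0)"
proof (induction i arbitrary: l)
  case 0 then show ?case by simp
next
  case (Suc i) then show ?case by (simp add: padd_def pm_def)
qed

lemma tp_c': "tp (0,[:-pi:]) x = - pi * sin (pi*x)"
  by (simp add: tp_def)

lemma Tm_diag: "tp (Tm i i) x = sin (pi*x) * (- pi * sin (pi*x)) ^ i"
proof (induction i)
  case 0 then show ?case by (simp add: tp_def)
next
  case (Suc i)
  have "tp (Tm (Suc i) (Suc i)) x = tp (pm (0,[:-pi:]) (Tm i i)) x"
    by (simp add: tp_padd Tm_zero)
  also have "\<dots> = (- pi * sin (pi*x)) * (sin (pi*x) * (- pi * sin (pi*x)) ^ i)"
    by (simp only: tp_pm tp_c' Suc)
  finally show ?case by simp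
qed

lemma deriv_tp_fun:
  "(deriv ^^ i) (tp (0,q)) = (\<lambda>x. \<Sum>l\<le>i. tp (Tm i l) x * poly ((pderiv^^l) q) (cos (pi*x)))"
proof (induction i)
  case 0 then show ?case by (simp add: tp_def fun_eq_iff)
next
  case (Suc i)
  show ?case
  proof
    fix x
    have d: "((\<lambda>x. \<Sum>l\<le>i. tp (Tm i l) x * poly ((pderiv^^l) q) (cos (pi*x))) has_real_derivative
      (\<Sum>l\<le>i. tp (Dp (Tm i l)) x * poly ((pderiv^^l) q) (cos (pi*x))
         + tp (Tm i l) x * (poly ((pderiv^^(Suc l)) q) (cos (pi*x)) * (- sin (pi*x) * pi)))) (at x)"
      by (auto intro!: derivative_eq_intros DERIV_chain2[OF poly_DERIV] tp_deriv sum.cong simp: algebra_simps)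
    have "(deriv ^^ Suc i) (tp (0,q)) x = deriv (\<lambda>x. \<Sum>l\<le>i. tp (Tm i l) x * poly ((pderiv^^l) q) (cos (pi*x))) x"
      using Suc by simp
    also have "\<dots> = (\<Sum>l\<le>i. tp (Dp (Tm i l)) x * poly ((pderiv^^l) q) (cos (pi*x)))
         + (\<Sum>l\<le>i. tp (pm (0,[:-pi:]) (Tm i l)) x * poly ((pderiv^^(Suc l)) q) (cos (pi*x)))"
      apply (subst DERIV_imp_deriv[OF d])
      apply (simp only: sum.distrib[symmetric] tp_pm tp_c')
      by (rule sum.cong) (simp_all add: algebra_simps)
    also have "\<dots> = (\<Sum>l\<le>Suc i. tp (Tm (Suc i) l) x * poly ((pderiv^^l) q) (cos (pi*x)))"
    proof -
      let ?Q = "\<lambda>l. poly ((pderiv^^l) q) (cos (pi*x))"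
      have e0: "(\<Sum>l\<le>Suc i. tp (Tm (Suc i) l) x * ?Q l) = (\<Sum>l\<le>Suc i. tp (Dp (Tm i l)) x * ?Q l)
         + (\<Sum>l\<le>Suc i. (if l = 0 then 0 else tp (pm (0,[:-pi:]) (Tm i (l-1))) x) * ?Q l)"
        by (simp only: sum.distrib[symmetric]) (rule sum.cong, auto simp: tp_padd algebra_simps)
      have e1: "(\<Sum>l\<le>Suc i. tp (Dp (Tm i l)) x * ?Q l) = (\<Sum>l\<le>i. tp (Dp (Tm i l)) x * ?Q l)"
        by (simp add: Tm_zero)
      have e2: "(\<Sum>l\<le>Suc i. (if l = 0 then 0 else tp (pm (0,[:-pi:]) (Tm i (l-1))) x) * ?Q l)
          = (\<Sum>l\<le>i. tp (pm (0,[:-pi:]) (Tm i l)) x * ?Q (Suc l))"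
        by (simp only: sum.atMost_Suc_shift) simp
      show ?thesis using e0 e1 e2 by simp
    qed
    finally show "(deriv ^^ Suc i) (tp (0,q)) x = (\<Sum>l\<le>Suc i. tp (Tm (Suc i) l) x * poly ((pderiv^^l) q) (cos (pi*x)))" .
  qed
qed



fun cheb :: "nat \<Rightarrow> real poly" where
  "cheb 0 = 1"
| "cheb (Suc 0) = [:0,2:]"
| "cheb (Suc (Suc j)) = [:0,2:] * cheb (Suc j) - cheb j"

lemma cheb_sin: "sin (real (Suc j) * t) = sin t * poly (cheb j) (cos t)"
proof (induction j rule: cheb.induct)
  case 1 then show ?case by simp
next
  case 2 then show ?case by (simp add: sin_double)
next
  case (3 j)
  have "sin (real (Suc (Suc (Suc j))) * t) = sin (real (Suc (Suc j)) * t + t)"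
    by (simp add: algebra_simps)
  also have "\<dots> = 2 * cos t * sin (real (Suc (Suc j)) * t) - sin (real (Suc j) * t)"
  proof -
    have "sin (real (Suc j) * t) = sin (real (Suc (Suc j)) * t - t)" by (simp add: algebra_simps)
    then show ?thesis by (simp add: sin_add sin_diff)
  qed
  also have "\<dots> = sin t * poly (cheb (Suc (Suc j))) (cos t)"
    using 3 by (simp add: algebra_simps)
  finally show ?case .
qed

lemma cheb_coeff: "coeff (cheb j) j = 2^j \<and> (\<forall>m>j. coeff (cheb j) m = 0)"
proof (induction j rule: cheb.induct)
  case 1 then show ?case by simp
next
  case 2 then show ?case by (auto simp: coeff_pCons split: nat.splits)
next
  case (3 j)
  have c: "coeff ([:0,2:] * p) (Suc m) = 2 * coeff p m" for p :: "real poly" and m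
    by (simp add: mult_pCons_left)
  show ?case
  proof
    show "coeff (cheb (Suc (Suc j))) (Suc (Suc j)) = 2 ^ Suc (Suc j)"
      using 3 by (simp add: c)
    show "\<forall>m>Suc (Suc j). coeff (cheb (Suc (Suc j))) m = 0"
    proof (intro allI impI)
      fix m assume "Suc (Suc j) < m"
      then obtain m' where m: "m = Suc m'" "Suc j < m'" by (cases m) auto
      then show "coeff (cheb (Suc (Suc j))) m = 0" using 3 by (simp add: c)
    qed
  qed
qed

lemma hpd_coeff: "coeff ((pderiv^^l) p) m = pochhammer (real (Suc m)) l * coeff p (m+l)"
proof (induction l arbitrary: m)
  case 0 then show ?case by simp
next
  case (Suc l)
  have "coeff ((pderiv^^Suc l) p) m = real (Suc m) * coeff ((pderiv^^l) p) (Suc m)"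
    by (simp add: coeff_pderiv)
  also have "\<dots> = pochhammer (real (Suc m)) (Suc l) * coeff p (m + Suc l)"
    by (simp add: Suc pochhammer_rec)
  finally show ?case .
qed

lemma hpd_cheb_zero: "j < l \<Longrightarrow> (pderiv^^l) (cheb j) = 0"
  by (rule poly_eqI) (simp add: hpd_coeff cheb_coeff)

lemma hpd_cheb_diag: "(pderiv^^j) (cheb j) = [:fact j * 2^j:]"
proof (rule poly_eqI)
  fix m show "coeff ((pderiv^^j) (cheb j)) m = coeff [:fact j * 2^j:] m"
  proof (cases m)
    case 0 then show ?thesis by (simp add: hpd_coeff cheb_coeff pochhammer_fact)
  next
    case (Suc m') then show ?thesis by (simp add: hpd_coeff cheb_coeff)
  qed
qed

lemma sin_tp: "(\<lambda>x. sin (real (Suc j) * pi * x)) = tp (0, cheb j)"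
proof
  fix x show "sin (real (Suc j) * pi * x) = tp (0, cheb j) x"
    using cheb_sin[of j "pi*x"] by (simp add: tp_def mult.assoc)
qed

lemma wr_tp:
  assumes "\<forall>j<m. fs j = tp (0, p j)"
  shows "wronskian m fs x = (\<Prod>i<m. tp (Tm i i) x) *
     Determinant.det (Matrix.mat m m (\<lambda>(l,j). poly ((pderiv^^l) (p j)) (cos (pi*x))))"
proof -
  let ?T = "Matrix.mat m m (\<lambda>(i,l). tp (Tm i l) x)"
  let ?P = "Matrix.mat m m (\<lambda>(l,j). poly ((pderiv^^l) (p j)) (cos (pi*x)))"
  have eq: "Matrix.mat m m (\<lambda>(i,j). (deriv^^i) (fs j) x) = ?T * ?P"
  proof (rule eq_matI)
    fix i j assume ij: "i < dim_row (?T * ?P)" "j < dim_col (?T * ?P)"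
    then have i: "i < m" and j: "j < m" by auto
    have "(deriv^^i) (fs j) x = (\<Sum>l\<le>i. tp (Tm i l) x * poly ((pderiv^^l) (p j)) (cos (pi*x)))"
      using assms j by (simp add: deriv_tp_fun)
    also have "\<dots> = (\<Sum>l\<in>{0..<m}. tp (Tm i l) x * poly ((pderiv^^l) (p j)) (cos (pi*x)))"
      by (rule sum.mono_neutral_left) (use i in \<open>auto simp: Tm_zero\<close>)
    also have "\<dots> = (?T * ?P) $$ (i,j)"
      using i j by (simp add: scalar_prod_def)
    finally show "Matrix.mat m m (\<lambda>(i,j). (deriv^^i) (fs j) x) $$ (i,j) = (?T * ?P) $$ (i,j)"
      using i j by simp
  qed auto
  have dT: "Determinant.det ?T = (\<Prod>i<m. tp (Tm i i) x)"
    by (subst det_lower_triangular[of m]) (auto simp: Tm_zero prod_list_diag_prod atLeast0LessThan)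
  show ?thesis unfolding wronskian_def eq
    by (subst det_mult[of _ m]) (auto simp: dT)
qed



lemma det_P:
  assumes "\<forall>j<m. j < m - 1 \<longrightarrow> p j = cheb j"
  shows "Determinant.det (Matrix.mat m m (\<lambda>(l,j). poly ((pderiv^^l) (p j)) c))
       = (\<Prod>i<m. poly ((pderiv^^i) (p i)) c)"
proof -
  have ut: "upper_triangular (Matrix.mat m m (\<lambda>(l,j). poly ((pderiv^^l) (p j)) c))"
    unfolding upper_triangular_def using assms by (auto simp: hpd_cheb_zero)
  show ?thesis
    by (subst det_upper_triangular[OF ut, of m]) (auto simp: prod_list_diag_prod atLeast0LessThan)
qed

lemma sin_fam_tp: "sin_fam j = tp (0, cheb j)"
  unfolding sin_fam_def using sin_tp[of j] by simp

lemma g_formula: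
  assumes n: "n \<ge> 2" and x: "0 < x" "x < 1"
  shows "g_fun n k x = sin (pi*x) * (- pi * sin (pi*x)) ^ (n-1)
            * poly ((pderiv^^(n-1)) (cheb (n+k-1))) (cos (pi*x))"
proof -
  define p where "p j = (if j < n - 1 then cheb j else cheb (n+k-1))" for j
  define c where "c = cos (pi*x)"
  define A where "A = (\<Prod>i<n-1. tp (Tm i i) x)"
  define B where "B = (\<Prod>i<n-1. poly ((pderiv^^i) (cheb i)) c)"
  have sx: "sin (pi*x) > 0" using x by (intro sin_gt_zero) auto
  have A0: "A \<noteq> 0" unfolding A_def using sx by (auto simp: Tm_diag)
  have B0: "B \<noteq> 0" unfolding B_def by (auto simp: hpd_cheb_diag)
  have nn: "n = Suc (n-1)" using n by simp
  have fsn: "\<forall>j<n. (\<lambda>j. if j < n - 1 then sin_fam j else (\<lambda>x. sin (real (n + k) * pi * x))) j = tp (0, p j)"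
  proof (intro allI impI)
    fix j assume "j < n"
    show "(\<lambda>j. if j < n - 1 then sin_fam j else (\<lambda>x. sin (real (n + k) * pi * x))) j = tp (0, p j)"
    proof (cases "j < n - 1")
      case True then show ?thesis by (simp add: p_def sin_fam_tp)
    next
      case False
      have "Suc (n+k-1) = n+k" using n by simp
      then have e: "(\<lambda>x. sin (real (n+k)*pi*x)) = tp (0, cheb (n+k-1))"
        using sin_tp[of "n+k-1"] by metis
      show ?thesis using False e by (simp add: p_def)
    qed
  qed
  have num: "wronskian n (\<lambda>j. if j < n - 1 then sin_fam j else (\<lambda>x. sin (real (n + k) * pi * x))) x
      = (A * tp (Tm (n-1) (n-1)) x) * (B * poly ((pderiv^^(n-1)) (cheb (n+k-1))) c)"
  proof -
    have "wronskian n (\<lambda>j. if j < n - 1 then sin_fam j else (\<lambda>x. sin (real (n + k) * pi * x))) x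
      = (\<Prod>i<n. tp (Tm i i) x) * (\<Prod>i<n. poly ((pderiv^^i) (p i)) c)"
      by (subst wr_tp[OF fsn], subst det_P) (auto simp: p_def c_def)
    also have "\<dots> = (A * tp (Tm (n-1) (n-1)) x) * (B * poly ((pderiv^^(n-1)) (cheb (n+k-1))) c)"
    proof -
      have pb: "(\<Prod>i<n-1. poly ((pderiv^^i) (p i)) c) = B"
        unfolding B_def by (rule prod.cong) (auto simp: p_def)
      have pn: "p (n-1) = cheb (n+k-1)" by (simp add: p_def)
      show ?thesis
        by (subst (1 2) nn, simp only: prod.lessThan_Suc pb pn flip: A_def)
    qed
    finally show ?thesis .
  qed
  have den: "wronskian (n-1) sin_fam x = A * B"
    by (subst wr_tp[of _ _ cheb]) (auto simp: sin_fam_tp det_P A_def B_def c_def)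
  show ?thesis unfolding g_fun_def num den
    using A0 B0 by (simp add: Tm_diag c_def)
qed



lemma cheb_ode:
  "poly ([:1,0,-1:] * pderiv (pderiv (cheb j)) - [:0,3:] * pderiv (cheb j)
      + Polynomial.smult (real (j*(j+2))) (cheb j)) t = 0"
proof -
  let ?U = "cheb j"
  define R where "R = [:1,0,-1:] * pderiv (pderiv (cheb j)) - [:0,3:] * pderiv (cheb j)
      + Polynomial.smult (real (j*(j+2))) (cheb j)"
  define a where "a = real (Suc j)"
  have feq: "(\<lambda>t. sin t * poly ?U (cos t)) = (\<lambda>t. sin (a * t))"
    using cheb_sin[of j] by (simp add: a_def)
  define f1 where "f1 t = cos t * poly ?U (cos t) - sin t * sin t * poly (pderiv ?U) (cos t)" for t
  have d1: "((\<lambda>t. sin t * poly ?U (cos t)) has_real_derivative f1 t) (at t)" for t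
    unfolding f1_def
    by (auto intro!: derivative_eq_intros DERIV_chain2[OF poly_DERIV] simp: algebra_simps)
  have d1': "((\<lambda>t. sin (a * t)) has_real_derivative a * cos (a * t)) (at t)" for t
    by (auto intro!: derivative_eq_intros)
  have f1eq: "f1 = (\<lambda>t. a * cos (a * t))"
  proof
    fix t show "f1 t = a * cos (a * t)"
      using DERIV_unique[OF d1[of t]] d1'[of t] feq by simp
  qed
  define f2 where "f2 t = sin t * poly R (cos t)
      - (real (j*(j+2)) + 1) * (sin t * poly ?U (cos t))" for t
  have ss: "sin t * sin t = 1 - cos t * cos t" for t :: real using ss_id by simp
  have d2: "(f1 has_real_derivative f2 t) (at t)" for t
  proof -
    have "(f1 has_real_derivative
       (- sin t * poly ?U (cos t) + cos t * (poly (pderiv ?U) (cos t) * - sin t))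
       - ((cos t * sin t + sin t * cos t) * poly (pderiv ?U) (cos t)
          + sin t * sin t * (poly (pderiv (pderiv ?U)) (cos t) * - sin t))) (at t)"
      unfolding f1_def[abs_def]
      by (auto intro!: derivative_eq_intros DERIV_chain2[OF poly_DERIV])
    moreover have "(- sin t * poly ?U (cos t) + cos t * (poly (pderiv ?U) (cos t) * - sin t))
       - ((cos t * sin t + sin t * cos t) * poly (pderiv ?U) (cos t)
          + sin t * sin t * (poly (pderiv (pderiv ?U)) (cos t) * - sin t)) = f2 t"
      unfolding f2_def R_def
      by (simp add: algebra_simps ss) 
    ultimately show ?thesis by simp
  qed
  have d2': "((\<lambda>t. a * cos (a * t)) has_real_derivative - a * a * sin (a * t)) (at t)" for t
    by (auto intro!: derivative_eq_intros)
  have f2eq: "f2 t = - a * a * sin (a * t)" for t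
    using DERIV_unique[OF d2[of t]] d2'[of t] f1eq by simp
  have aa: "a * a = real (j*(j+2)) + 1" unfolding a_def by (simp add: algebra_simps)
  have z: "sin t * poly R (cos t) = 0" for t
  proof -
    have "sin (a*t) = sin t * poly ?U (cos t)" using feq by metis
    then have "f2 t = - (real (j*(j+2)) + 1) * (sin t * poly ?U (cos t))"
      using f2eq[of t] by (simp add: a_def algebra_simps)
    then show ?thesis unfolding f2_def by linarith
  qed
  have "poly R t = 0" if "-1 < t" "t < 1" for t
    using z[of "arccos t"] sin_arccos_nonzero[OF that] that by simp
  then have "{-1<..<1} \<subseteq> {t. poly R t = 0}" by auto
  then have "R = 0"
  proof (rule contrapos_pp)
    assume "R \<noteq> 0"
    then have "finite {t. poly R t = 0}" by (rule poly_roots_finite)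
    moreover have "infinite {-1<..<(1::real)}" by (rule infinite_Ioo) simp
    ultimately show "\<not> {-1<..<1} \<subseteq> {t. poly R t = 0}" using finite_subset by blast
  qed
  then show ?thesis unfolding R_def by simp
qed


definition QQ :: "nat \<Rightarrow> nat \<Rightarrow> real poly" where
  "QQ N s = (pderiv^^s) (cheb (N-1))"

definition GP :: "nat \<Rightarrow> nat \<Rightarrow> real poly" where
  "GP N s = [:1,0,-1:] * QQ N (Suc (Suc s)) - [:0, real (2 * s + 3):] * QQ N (Suc s)
      + Polynomial.smult (real N ^ 2 - real (Suc s) ^ 2) (QQ N s)"

lemma QQ_Suc: "QQ N (Suc s) = pderiv (QQ N s)"
  by (simp add: QQ_def)

lemma GP_0: assumes "N \<ge> 1" shows "GP N 0 = 0"
proof -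
  have "real ((N-1)*((N-1)+2)) = real N ^ 2 - 1"
    using assms by (cases N) (auto simp: power2_eq_square algebra_simps)
  then have "poly (GP N 0) t = 0" for t
    using cheb_ode[of "N-1" t] by (simp add: GP_def QQ_def numeral_3_eq_3)
  then have "poly (GP N 0) = poly 0" by auto
  then show ?thesis by (simp only: poly_eq_poly_eq_iff)
qed

lemma GP_Suc: "pderiv (GP N s) = GP N (Suc s)"
proof -
  have "poly (pderiv (GP N s)) t = poly (GP N (Suc s)) t" for t
    apply (simp add: GP_def QQ_Suc pderiv_mult pderiv_add pderiv_diff pderiv_smult pderiv_pCons pderiv_minus)
    apply (simp add: power2_eq_square)
    apply (simp add: algebra_simps)
    done
  then have "poly (pderiv (GP N s)) = poly (GP N (Suc s))" by auto
  then show ?thesis by (simp only: poly_eq_poly_eq_iff)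
qed

lemma GP_zero: assumes "N \<ge> 1" shows "GP N s = 0"
proof (induction s)
  case 0 then show ?case using GP_0[OF assms] .
next
  case (Suc s) then show ?case using GP_Suc[of N s] by simp
qed



definition hh :: "nat \<Rightarrow> nat \<Rightarrow> real \<Rightarrow> real" where
  "hh N s x = sin (pi*x) ^ (2 * s + 2) * (poly (QQ N s) (cos (pi*x)))^2"

definition FF :: "nat \<Rightarrow> nat \<Rightarrow> real \<Rightarrow> real" where
  "FF N s x = sin (pi*x) ^ (2 * s + 2) * sin (pi*x) * poly (QQ N (Suc s)) (cos (pi*x)) * poly (QQ N s) (cos (pi*x)) / pi"

lemma alg_FF:
  fixes T u c q0 q1 q2 D b :: real
  assumes "u*u*q2 - (b+1)*c*q1 + D*q0 = 0"
  shows "b*T*c*u*q1*q0 + T*u*c*q1*q0 + T*u*u*(q2*(-u))*q0 + T*u*u*q1*(q1*(-u))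
       = D*(T*u)*q0^2 - T*u*u*u*q1^2"
proof -
  have "b*T*c*u*q1*q0 + T*u*c*q1*q0 + T*u*u*(q2*(-u))*q0 + T*u*u*q1*(q1*(-u))
      - (D*(T*u)*q0^2 - T*u*u*u*q1^2) = - (T*u*q0) * (u*u*q2 - (b+1)*c*q1 + D*q0)"
    by (simp add: algebra_simps power2_eq_square)
  then show ?thesis using assms by simp
qed

lemma FF_deriv:
  assumes N: "N \<ge> 1"
  shows "(FF N s has_real_derivative ((real N^2 - real (Suc s)^2) * hh N s x - hh N (Suc s) x)) (at x)"
proof -
  define T where "T = sin (pi*x) ^ (2 * s + 1)"
  define wn where "wn = sin (pi*x)"
  define c where "c = cos (pi*x)"
  define q0 where "q0 = poly (QQ N s) c"
  define q1 where "q1 = poly (QQ N (Suc s)) c"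
  define q2 where "q2 = poly (QQ N (Suc (Suc s))) c"
  define D where "D = real N^2 - real (Suc s)^2"
  have pw: "sin (pi*x) ^ (2 * s + 2) = T * wn" by (simp add: T_def wn_def)
  have pw2: "sin (pi*x) ^ (2 * Suc s + 2) = T * wn * wn * wn" by (simp add: T_def wn_def)
  have ss: "wn * wn = 1 - c * c" by (simp add: wn_def c_def ss_id)
  have g: "(1 - c*c) * q2 - real (2 * s + 3) * c * q1 + D * q0 = 0"
    using arg_cong[OF GP_zero[OF N, of s], of "\<lambda>p. poly p c"]
    by (simp add: GP_def D_def q0_def q1_def q2_def algebra_simps)
  have g': "wn*wn*q2 - (real (2 * s + 2) + 1)*c*q1 + D*q0 = 0"
    using g unfolding ss by (simp add: algebra_simps)
  have d: "(FF N s has_real_derivative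
     real (2 * s + 2)*T*c*wn*q1*q0 + T*wn*c*q1*q0 + T*wn*wn*(q2*(-wn))*q0 + T*wn*wn*q1*(q1*(-wn))) (at x)"
    unfolding FF_def[abs_def]
    apply (rule derivative_eq_intros refl DERIV_chain2[OF poly_DERIV] | simp only: QQ_Suc)+
    using pi_gt_zero
    apply (simp_all add: T_def wn_def c_def q0_def q1_def q2_def QQ_Suc field_simps)
    done
  have e: "D*(T*wn)*q0^2 - T*wn*wn*wn*q1^2 = (real N^2 - real (Suc s)^2) * hh N s x - hh N (Suc s) x"
    unfolding hh_def pw pw2 by (simp only: D_def q0_def q1_def c_def mult.assoc)
  show ?thesis
    using d unfolding alg_FF[OF g'] e .
qed


lemma hh_cont: "continuous_on A (hh N s)"
  unfolding hh_def[abs_def] by (intro continuous_intros)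

definition KK :: "nat \<Rightarrow> nat \<Rightarrow> real" where
  "KK N s = integral {0..1} (hh N s)"

lemma hh_int: "(hh N s has_integral KK N s) {0..1}"
  unfolding KK_def by (intro integrable_integral integrable_continuous_interval hh_cont)

lemma FF_01: "FF N s 0 = 0" "FF N s 1 = 0"
  by (simp_all add: FF_def)

lemma KK_Suc:
  assumes N: "N \<ge> 1"
  shows "KK N (Suc s) = (real N^2 - real (Suc s)^2) * KK N s"
proof -
  let ?D = "real N^2 - real (Suc s)^2"
  have "((\<lambda>x. ?D * hh N s x - hh N (Suc s) x) has_integral (FF N s 1 - FF N s 0)) {0..1}"
    apply (rule fundamental_theorem_of_calculus)
     apply simp
    apply (rule has_vector_derivative_at_within)
    apply (subst has_real_derivative_iff_has_vector_derivative[symmetric])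
    apply (rule FF_deriv[OF N])
    done
  then have a: "((\<lambda>x. ?D * hh N s x - hh N (Suc s) x) has_integral 0) {0..1}"
    by (simp add: FF_01)
  have b: "((\<lambda>x. ?D * hh N s x - hh N (Suc s) x) has_integral (?D * KK N s - KK N (Suc s))) {0..1}"
    by (intro has_integral_diff has_integral_mult_right hh_int)
  from has_integral_unique[OF a b] show ?thesis by simp
qed

lemma KK_0:
  assumes N: "N \<ge> 1"
  shows "KK N 0 = 1/2"
proof -
  have hx: "hh N 0 x = sin (real N * pi * x) ^ 2" for x
  proof -
    have "sin (real N * pi * x) = sin (real (Suc (N-1)) * (pi * x))" using N by (simp add: mult.assoc)
    also have "\<dots> = sin (pi*x) * poly (cheb (N-1)) (cos (pi*x))" by (rule cheb_sin)
    finally show ?thesis by (simp add: hh_def QQ_def power_mult_distrib power2_eq_square)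
  qed
  have Np: "real N > 0" using N by simp
  define G where "G x = x/2 - sin (2 * real N * pi * x) / (4 * real N * pi)" for x
  have dG: "(G has_real_derivative hh N 0 x) (at x)" for x
  proof -
    have "(G has_real_derivative 1/2 - cos (2 * real N * pi * x) * (2 * real N * pi) / (4 * real N * pi)) (at x)"
      unfolding G_def[abs_def] by (auto intro!: derivative_eq_intros)
    moreover have "1/2 - cos (2 * real N * pi * x) * (2 * real N * pi) / (4 * real N * pi) = hh N 0 x"
    proof -
      have "cos (2 * real N * pi * x) = 1 - 2 * sin (real N * pi * x) ^ 2"
        using cos_double_sin[of "real N * pi * x"] by (simp add: mult.assoc)
      then show ?thesis using Np by (simp add: hx field_simps)
    qed
    ultimately show ?thesis by simp
  qed
  have "(hh N 0 has_integral (G 1 - G 0)) {0..1}"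
    apply (rule fundamental_theorem_of_calculus)
     apply simp
    apply (rule has_vector_derivative_at_within)
    apply (subst has_real_derivative_iff_has_vector_derivative[symmetric])
    apply (rule dG)
    done
  moreover have "G 1 - G 0 = 1/2"
  proof -
    have "sin (2 * real N * pi) = 0" using sin_npi[of "2*N"] by (simp add: mult.assoc)
    then show ?thesis by (simp add: G_def)
  qed
  ultimately show ?thesis using hh_int has_integral_unique by metis
qed

lemma KK_formula:
  assumes N: "N \<ge> 1"
  shows "KK N s = 1/2 * (\<Prod>i=1..s. real N ^ 2 - real i ^ 2)"
proof (induction s)
  case 0 then show ?case using KK_0[OF N] by simp
next
  case (Suc s) then show ?case using KK_Suc[OF N, of s] by (simp add: prod.nat_ivl_Suc')
qed


lemma sq_alg: "(a * (- b * a) ^ m * q)^2 = (b::real)^(2*m) * (a^(2*m+2) * q^2)"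
proof -
  have e1: "((- b * a) ^ m)^2 = b^(2*m) * a^(2*m)"
  proof -
    have "((- b * a) ^ m)^2 = ((- b * a)^2)^m" by (simp only: power_mult[symmetric] mult.commute)
    also have "(- b * a)^2 = b^2 * a^2" by (simp add: power_mult_distrib)
    finally show ?thesis by (simp only: power_mult_distrib power_mult[symmetric] mult.commute)
  qed
  have "(a * (- b * a) ^ m * q)^2 = a^2 * ((- b * a) ^ m)^2 * q^2" by (simp only: power_mult_distrib)
  also have "\<dots> = b^(2*m) * (a^(2*m+2) * q^2)" unfolding e1 by (simp add: power_add power2_eq_square algebra_simps)
  finally show ?thesis .
qed

lemma prodA: "(\<Prod>i\<in>{1..m}. real (m + k + 1 - i)) * fact k = fact (m + k)"
proof (induction m)
  case 0 then show ?case by simp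
next
  case (Suc m)
  have a: "(\<Prod>i\<in>{1..Suc m}. real (Suc m + k + 1 - i))
      = real (Suc m + k + 1 - 1) * (\<Prod>i\<in>{Suc 1..Suc m}. real (Suc m + k + 1 - i))"
    by (rule prod.atLeast_Suc_atMost) simp
  have b: "(\<Prod>i\<in>{Suc 1..Suc m}. real (Suc m + k + 1 - i)) = (\<Prod>i\<in>{1..m}. real (m + k + 1 - i))"
    by (subst prod.shift_bounds_cl_Suc_ivl) simp
  have c: "real (Suc m + k + 1 - 1) = real (Suc (m + k))" by simp
  have "(\<Prod>i\<in>{1..Suc m}. real (Suc m + k + 1 - i)) * fact k
      = real (Suc (m + k)) * ((\<Prod>i\<in>{1..m}. real (m + k + 1 - i)) * fact k)"
    by (simp only: a b c mult.assoc)
  also have "\<dots> = fact (Suc (m + k))" by (simp only: Suc.IH fact_Suc)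
  finally show ?case by simp
qed

lemma prodB: "(\<Prod>i\<in>{1..m}. real (N + i)) * fact N = fact (N + m)"
proof (induction m)
  case 0 then show ?case by simp
next
  case (Suc m)
  have "(\<Prod>i\<in>{1..Suc m}. real (N + i)) * fact N = real (Suc (N + m)) * ((\<Prod>i\<in>{1..m}. real (N + i)) * fact N)"
    by (subst prod.nat_ivl_Suc') (simp_all only: mult.assoc add_Suc_right)
  also have "\<dots> = fact (Suc (N + m))" by (simp only: Suc.IH fact_Suc)
  finally show ?case by simp
qed

lemma gamma_part:
  assumes n: "n \<ge> 2"
  shows "1/2 * pi ^ (2*n - 2) * (\<Prod>i=1..n-1. (real (n + k))\<^sup>2 - (real i)\<^sup>2)
           = pi ^ (2*n - 2) * Gamma (real (2*n + k)) / (2 * real (n + k) * fact k)"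
proof -
  define m where "m = n - 1"
  define N where "N = n + k"
  have Nm: "N = m + k + 1" using n by (simp add: m_def N_def)
  have P: "(\<Prod>i=1..m. (real N)\<^sup>2 - (real i)\<^sup>2) = (\<Prod>i\<in>{1..m}. real (m + k + 1 - i)) * (\<Prod>i\<in>{1..m}. real (N + i))"
    unfolding prod.distrib[symmetric]
    by (rule prod.cong) (auto simp: Nm of_nat_diff power2_eq_square algebra_simps)
  have G: "Gamma (real (2*n + k)) = fact (N + m)"
  proof -
    have "real (2*n+k) = 1 + real (N + m)" using n by (simp add: N_def m_def)
    then show ?thesis using Gamma_fact[of "N+m"] by simp
  qed
  have fN: "fact N = real N * fact (m + k)" using Nm by (simp add: fact_Suc)
  have Np: "real N > 0" using Nm by simp
  define A where "A = (\<Prod>i\<in>{1..m}. real (m + k + 1 - i))"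
  define B where "B = (\<Prod>i\<in>{1..m}. real (N + i))"
  have fk: "fact (m+k) \<noteq> (0::real)" by simp
  have "(\<Prod>i=1..m. (real N)\<^sup>2 - (real i)\<^sup>2) = fact (N + m) / (real N * fact k)"
  proof -
    have "fact (N + m) = (A * fact k) * (B * fact N) / fact (m+k)"
      by (simp only: A_def B_def prodA prodB) (simp add: fk)
    also have "\<dots> = A * B * (real N * fact k)"
      unfolding fN using fk by (simp add: field_simps)
    finally show ?thesis using Np unfolding P A_def[symmetric] B_def[symmetric] by (simp add: field_simps)
  qed
  then have h: "(\<Prod>i=1..n-1. (real (n + k))\<^sup>2 - (real i)\<^sup>2) = Gamma (real (2*n + k)) / (real (n + k) * fact k)"
    using G unfolding m_def N_def by metis
  have nz: "real (n + k) \<noteq> 0" "fact k \<noteq> (0::real)" using n by auto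
  have gen: "\<And>b c p g. (b::real) \<noteq> 0 \<Longrightarrow> c \<noteq> 0 \<Longrightarrow> 1/2 * p * (g / (b*c)) = p * g / (2*b*c)"
    by (simp add: field_simps)
  show ?thesis unfolding h by (rule gen[OF nz])
qed

theorem mainTheorem7:
  fixes n k :: nat
  assumes "n \<ge> 2"
  shows "((\<lambda>x. (g_fun n k x)\<^sup>2) has_integral
            (1/2 * pi ^ (2*n - 2) * (\<Prod>i=1..n-1. (real (n + k))\<^sup>2 - (real i)\<^sup>2))) {0<..<1}
         \<and> 1/2 * pi ^ (2*n - 2) * (\<Prod>i=1..n-1. (real (n + k))\<^sup>2 - (real i)\<^sup>2)
           = pi ^ (2*n - 2) * Gamma (real (2*n + k)) / (2 * real (n + k) * fact k)"
proof
  define N where "N = n + k"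
  have N: "N \<ge> 1" using assms by (simp add: N_def)
  have e: "(g_fun n k x)\<^sup>2 = pi ^ (2*n - 2) * hh N (n-1) x" if "x \<in> {0<..<1}" for x
  proof -
    have g: "g_fun n k x = sin (pi*x) * (- pi * sin (pi*x)) ^ (n-1)
            * poly ((pderiv^^(n-1)) (cheb (n+k-1))) (cos (pi*x))"
      using that g_formula[OF assms, of x k] by simp
    have "(g_fun n k x)\<^sup>2 = pi ^ (2*(n-1)) * hh N (n-1) x"
      unfolding g sq_alg hh_def QQ_def N_def by (rule refl)
    moreover have "2*(n-1) = 2*n - 2" by simp
    ultimately show ?thesis by simp
  qed
  have "((\<lambda>x. pi ^ (2*n - 2) * hh N (n-1) x) has_integral (pi ^ (2*n - 2) * KK N (n-1))) {0..1}"
    by (intro has_integral_mult_right hh_int)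
  then have "((\<lambda>x. pi ^ (2*n - 2) * hh N (n-1) x) has_integral (pi ^ (2*n - 2) * KK N (n-1))) {0<..<1}"
    by (simp add: has_integral_Icc_iff_Ioo)
  then have "((\<lambda>x. (g_fun n k x)\<^sup>2) has_integral (pi ^ (2*n - 2) * KK N (n-1))) {0<..<1}"
    by (rule has_integral_eq[rotated]) (use e in auto)
  then show "((\<lambda>x. (g_fun n k x)\<^sup>2) has_integral
            (1/2 * pi ^ (2*n - 2) * (\<Prod>i=1..n-1. (real (n + k))\<^sup>2 - (real i)\<^sup>2))) {0<..<1}"
  proof -
    have kk: "KK N (n-1) = 1/2 * (\<Prod>i=1..n-1. (real (n + k))\<^sup>2 - (real i)\<^sup>2)"
      using KK_formula[OF N, of "n-1"] unfolding N_def .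
    have "pi ^ (2*n - 2) * KK N (n-1) = 1/2 * pi ^ (2*n - 2) * (\<Prod>i=1..n-1. (real (n + k))\<^sup>2 - (real i)\<^sup>2)"
      unfolding kk by (simp only: mult_ac)
    then show ?thesis using \<open>((\<lambda>x. (g_fun n k x)\<^sup>2) has_integral (pi ^ (2*n - 2) * KK N (n-1))) {0<..<1}\<close>
      by (simp only:)
  qed
  show "1/2 * pi ^ (2*n - 2) * (\<Prod>i=1..n-1. (real (n + k))\<^sup>2 - (real i)\<^sup>2)
           = pi ^ (2*n - 2) * Gamma (real (2*n + k)) / (2 * real (n + k) * fact k)"
    by (rule gamma_part[OF assms])
qed


end
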